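(* Suppose $m=1$. Then for every $\ell\in\{1,\dots,D\}$ the family $(\beta_{Q,\ell})_{Q\in\mathcal Q}$ is ultimately constant.
   Context: Let $(K,v)$ be a valued field, $\Gamma$ the divisible hull of $vK$, embedded in a divisible ordered abelian group $\Lambda$. Let $\nu\colon K[x]\to\Lambda\cup\{\infty\}$ be a valuation extending $v$ which is well-specified, i.e. it is not the case that simultaneously $\nu^{-1}(\infty)=0$, the value group of $\nu$ modulo $\Gamma$ is torsion, and the residue field of $\nu$ is algebraic over that of $v$. For $s\ge0$ let $\partial_s$ be the $s$-th Hasse–Schmidt derivative, defined by $f(x+y)=\sum_{s\ge0}(\partial_sf)y^s$. For nonconstant $f$ with $\nu(f)<\infty$ the level is $\epsilon_\nu(f)=\max\{(\nu(f)-\nu(\partial_sf))/s: s\ge1\}$; $\epsilon_\nu(a)=-\infty$ for $a\in K$. A monic $Q\in K[x]$ is a key polynomial for $\nu$ if $\epsilon_\nu(f)<\epsilon_\nu(Q)$ whenever $\deg f<\deg Q$. For monic $Q$, each $f$ has a unique $Q$-expansion $f=\sum_{i\ge0}f_{Q,i}Q^i$ with $\deg f_{Q,i}<\deg Q$; set $\nu_Q(f)=\min_i\nu(f_{Q,i}Q^i)$. Fix $m\ge1$ such that the set $\Psi_m$ of key polynomials of degree $m$ for $\nu$ is nonempty and has no element of maximal $\nu$-value. Let $\mathcal Q\subseteq\Psi_m$ be well-ordered by $Q<R\iff\nu(Q)<\nu(R)$ and cofinal in $\Psi_m$ for $\nu$-values. A family indexed by $\mathcal Q$ is ultimately constant if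 it is constant on a final segment of $\mathcal Q$. $f$ is $\mathcal Q$-stable if $\nu_Q(f)=\nu(f)$ for all $Q$ in a final segment of $\mathcal Q$, $\mathcal Q$-unstable otherwise. Assume unstable polynomials exist; limit key polynomials are the monic $\mathcal Q$-unstable polynomials of minimal degree, forming $\mathrm{KP}_\infty(\mathcal Q)$. Fix $F\in\mathrm{KP}_\infty(\mathcal Q)$, $D=\lfloor\deg F/m\rfloor$, $F=\sum_{\ell=0}^DF_{Q,\ell}Q^\ell$ its $Q$-expansion and $\beta_{Q,\ell}=\nu(F_{Q,\ell})\in\Lambda\cup\{\infty\}$. *)

theory Defs
  imports "HOL-Computational_Algebra.Polynomial" "HOL-Library.Extended"
begin

text \<open>Values of \<nu> live in \<Lambda> \<union> {\<infinity>}, rendered as the type 'g extended,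
  using only Fin and Pinf (Pinf = \<infinity>); Minf plays the role of -\<infinity> for levels.\<close>

definition nsm :: "nat \<Rightarrow> 'g::ab_group_add \<Rightarrow> 'g" where
  "nsm n y = (\<Sum>i<n. y)"

definition divn :: "nat \<Rightarrow> 'g::ab_group_add \<Rightarrow> 'g" where
  "divn n x = (THE y. nsm n y = x)"

definition divisible_group :: "'g::ab_group_add itself \<Rightarrow> bool" where
  "divisible_group _ \<longleftrightarrow> (\<forall>(x::'g) n. n > 0 \<longrightarrow> (\<exists>y. nsm n y = x))"

definition is_poly_valuation :: "('k::field poly \<Rightarrow> 'g::linordered_ab_group_add extended) \<Rightarrow> bool" where
  "is_poly_valuation \<nu> \<longleftrightarrow>
     (\<forall>f. \<nu> f \<noteq> Minf) \<and> \<nu> 0 = Pinf \<and> \<nu> 1 = Fin 0 \<and>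
     (\<forall>f g. \<nu> (f * g) = \<nu> f + \<nu> g) \<and>
     (\<forall>f g. min (\<nu> f) (\<nu> g) \<le> \<nu> (f + g))"

definition base_value_group :: "('k::field poly \<Rightarrow> 'g::linordered_ab_group_add extended) \<Rightarrow> 'g set" where
  "base_value_group \<nu> = {a. \<exists>c. c \<noteq> 0 \<and> \<nu> [:c:] = Fin a}"

definition Gamma :: "('k::field poly \<Rightarrow> 'g::linordered_ab_group_add extended) \<Rightarrow> 'g set" where
  "Gamma \<nu> = {x. \<exists>n>0. nsm n x \<in> base_value_group \<nu>}"

definition value_group :: "('k::field poly \<Rightarrow> 'g::linordered_ab_group_add extended) \<Rightarrow> 'g set" where
  "value_group \<nu> = {a - b | a b f g. \<nu> f = Fin a \<and> \<nu> g = Fin b}"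

definition value_group_torsion_mod_Gamma :: "('k::field poly \<Rightarrow> 'g::linordered_ab_group_add extended) \<Rightarrow> bool" where
  "value_group_torsion_mod_Gamma \<nu> \<longleftrightarrow> (\<forall>x \<in> value_group \<nu>. \<exists>n>0. nsm n x \<in> Gamma \<nu>)"

text \<open>Residue field of \<nu> (on K(x), when the support is 0) algebraic over that of v:
  every residue class of f/g with \<nu>(f) = \<nu>(g) is a root of a nonzero polynomial over
  the residue field of v, i.e. there are a_0..a_n in the valuation ring of v, not all in
  its maximal ideal, with \<nu>(\<Sum> a_i f^i g^(n-i)) > n \<nu>(g).\<close>
definition residue_field_algebraic :: "('k::field poly \<Rightarrow> 'g::linordered_ab_group_add extended) \<Rightarrow> bool" where
  "residue_field_algebraic \<nu> \<longleftrightarrow>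
    (\<forall>f g b. g \<noteq> 0 \<and> \<nu> g = Fin b \<and> \<nu> f = Fin b \<longrightarrow>
       (\<exists>n (a :: nat \<Rightarrow> 'k). (\<forall>i\<le>n. Fin 0 \<le> \<nu> [:a i:]) \<and> (\<exists>i\<le>n. \<nu> [:a i:] = Fin 0) \<and>
          Fin (nsm n b) < \<nu> (\<Sum>i\<le>n. smult (a i) (f ^ i * g ^ (n - i)))))"

definition well_specified :: "('k::field poly \<Rightarrow> 'g::linordered_ab_group_add extended) \<Rightarrow> bool" where
  "well_specified \<nu> \<longleftrightarrow>
     \<not> ({f. \<nu> f = Pinf} = {0} \<and> value_group_torsion_mod_Gamma \<nu> \<and> residue_field_algebraic \<nu>)"

text \<open>Hasse--Schmidt derivative: coefficient of y^s in f(x+y), computed in (K[x])[y].\<close>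
definition hasse :: "nat \<Rightarrow> 'k::field poly \<Rightarrow> 'k poly" where
  "hasse s f = coeff (pcompose (map_poly (\<lambda>c. [:c:]) f) [:[:0, 1:], 1:]) s"

text \<open>Level; Minf stands for -\<infinity>. Terms with \<nu>(\<partial>_s f) = \<infinity> contribute -\<infinity> and are omitted.\<close>
definition level :: "('k::field poly \<Rightarrow> 'g::linordered_ab_group_add extended) \<Rightarrow> 'k poly \<Rightarrow> 'g extended" where
  "level \<nu> f = (if degree f = 0 then Minf else
     Max {Fin (divn s (a - b)) | s a b. 1 \<le> s \<and> \<nu> f = Fin a \<and> \<nu> (hasse s f) = Fin b})"

definition key_poly :: "('k::field poly \<Rightarrow> 'g::linordered_ab_group_add extended) \<Rightarrow> 'k poly \<Rightarrow> bool" where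
  "key_poly \<nu> Q \<longleftrightarrow> lead_coeff Q = 1 \<and> \<nu> Q \<noteq> Pinf \<and>
     (\<forall>f. degree f < degree Q \<and> \<nu> f \<noteq> Pinf \<longrightarrow> level \<nu> f < level \<nu> Q)"

definition qexp :: "'k::field poly \<Rightarrow> 'k poly \<Rightarrow> nat \<Rightarrow> 'k poly" where
  "qexp Q f = (THE c. (\<forall>i. c i = 0 \<or> degree (c i) < degree Q) \<and>
       (\<exists>N. (\<forall>i>N. c i = 0) \<and> f = (\<Sum>i\<le>N. c i * Q ^ i)))"

definition nuQ :: "('k::field poly \<Rightarrow> 'g::linordered_ab_group_add extended) \<Rightarrow> 'k poly \<Rightarrow> 'k poly \<Rightarrow> 'g extended" where
  "nuQ \<nu> Q f = Min (range (\<lambda>i. \<nu> (qexp Q f i * Q ^ i)))"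

definition Psi :: "('k::field poly \<Rightarrow> 'g::linordered_ab_group_add extended) \<Rightarrow> nat \<Rightarrow> 'k poly set" where
  "Psi \<nu> m = {Q. key_poly \<nu> Q \<and> degree Q = m}"

definition ult_holds :: "('k::field poly \<Rightarrow> 'g::linordered_ab_group_add extended) \<Rightarrow> 'k poly set \<Rightarrow> ('k poly \<Rightarrow> bool) \<Rightarrow> bool" where
  "ult_holds \<nu> \<Q> P \<longleftrightarrow> (\<exists>Q0\<in>\<Q>. \<forall>Q\<in>\<Q>. \<nu> Q0 \<le> \<nu> Q \<longrightarrow> P Q)"

definition ultimately_constant :: "('k::field poly \<Rightarrow> 'g::linordered_ab_group_add extended) \<Rightarrow> 'k poly set \<Rightarrow> ('k poly \<Rightarrow> 'b) \<Rightarrow> bool" where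
  "ultimately_constant \<nu> \<Q> h \<longleftrightarrow> (\<exists>c. ult_holds \<nu> \<Q> (\<lambda>Q. h Q = c))"

definition Q_stable :: "('k::field poly \<Rightarrow> 'g::linordered_ab_group_add extended) \<Rightarrow> 'k poly set \<Rightarrow> 'k poly \<Rightarrow> bool" where
  "Q_stable \<nu> \<Q> f \<longleftrightarrow> ult_holds \<nu> \<Q> (\<lambda>Q. nuQ \<nu> Q f = \<nu> f)"

definition KP_infty :: "('k::field poly \<Rightarrow> 'g::linordered_ab_group_add extended) \<Rightarrow> 'k poly set \<Rightarrow> 'k poly set" where
  "KP_infty \<nu> \<Q> = {F. lead_coeff F = 1 \<and> \<not> Q_stable \<nu> \<Q> F \<and>
      (\<forall>G. lead_coeff G = 1 \<and> \<not> Q_stable \<nu> \<Q> G \<longrightarrow> degree F \<le> degree G)}"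

definition nu_well_ordered :: "('k::field poly \<Rightarrow> 'g::linordered_ab_group_add extended) \<Rightarrow> 'k poly set \<Rightarrow> bool" where
  "nu_well_ordered \<nu> \<Q> \<longleftrightarrow> inj_on \<nu> \<Q> \<and>
     (\<forall>S. S \<subseteq> \<Q> \<and> S \<noteq> {} \<longrightarrow> (\<exists>Q\<in>S. \<forall>R\<in>S. \<nu> Q \<le> \<nu> R))"

end

theory Submission
  imports Defs
begin


lemma pcompose_power: "pcompose (p ^ n) r = (pcompose p r) ^ n"
  by (induction n) (simp_all add: pcompose_mult pcompose_1)

lemma deg1_form:
  assumes "degree Q = 1" "lead_coeff Q = (1::'k::field)"
  shows "Q = [:coeff Q 0, 1:]"
proof (rule poly_eqI)
  fix n show "coeff Q n = coeff [:coeff Q 0, 1:] n"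
    using assms by (cases n) (auto simp: coeff_pCons coeff_eq_0 split: nat.splits)
qed

definition sh :: "'k::field poly \<Rightarrow> 'k" where "sh Q = - coeff Q 0"
definition TT :: "'k::field poly \<Rightarrow> 'k poly \<Rightarrow> 'k poly" where "TT Q f = pcompose f [:sh Q, 1:]"

lemma qexp_eq:
  assumes "degree Q = 1" "lead_coeff Q = (1::'k::field)"
  shows "qexp Q f = (\<lambda>i. [:coeff (TT Q f) i:])"
proof -
  define a where "a = sh Q"
  define P where "P = TT Q f"
  have Qf: "Q = [:-a,1:]" using deg1_form[OF assms] by (simp add: a_def sh_def)
  have QT: "pcompose Q [:a,1:] = [:0,1:]" unfolding Qf by (simp add: pcompose_pCons)
  have inv: "pcompose P [:-a,1:] = f"
    unfolding P_def TT_def a_def[symmetric]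
    by (simp add: pcompose_assoc[symmetric] pcompose_pCons)
  have Psum: "P = (\<Sum>i\<le>degree P. [:coeff P i:] * [:0,1:]^i)"
    by (subst poly_as_sum_of_monoms[symmetric, of P]) (simp add: monom_altdef)
  have fsum: "f = (\<Sum>i\<le>degree P. [:coeff P i:] * Q^i)"
  proof -
    have "f = pcompose (\<Sum>i\<le>degree P. [:coeff P i:] * [:0,1:]^i) [:-a,1:]"
      using inv Psum by simp
    also have "\<dots> = (\<Sum>i\<le>degree P. [:coeff P i:] * Q^i)"
      by (simp add: pcompose_sum pcompose_mult pcompose_power pcompose_pCons pcompose_smult Qf)
    finally show ?thesis .
  qed
  let ?c = "\<lambda>i. [:coeff P i:]"
  let ?R = "\<lambda>c. (\<forall>i. c i = 0 \<or> degree (c i) < degree Q) \<and>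
       (\<exists>N. (\<forall>i>N. c i = 0) \<and> f = (\<Sum>i\<le>N. c i * Q ^ i))"
  have R: "?R ?c"
    using fsum assms by (auto intro!: exI[of _ "degree P"] simp: coeff_eq_0)
  have U: "c = ?c" if "?R c" for c
  proof -
    from that obtain N where N: "\<forall>i>N. c i = 0" "f = (\<Sum>i\<le>N. c i * Q ^ i)"
      and dc: "\<forall>i. c i = 0 \<or> degree (c i) < degree Q" by blast
    have cc: "c i = [:coeff (c i) 0:]" for i
      using dc[rule_format, of i] assms(1)
      by (metis degree_0 less_one pCons_0_0 coeff_0 degree_0_id)
    have "P = pcompose (\<Sum>i\<le>N. c i * Q ^ i) [:a,1:]" unfolding P_def TT_def a_def using N by simp
    also have "\<dots> = (\<Sum>i\<le>N. c i * [:0,1:]^i)"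
      apply (simp add: pcompose_sum pcompose_mult pcompose_power QT)
      apply (rule sum.cong, simp)
      apply (subst (1 2) cc) apply simp done
    also have "\<dots> = (\<Sum>i\<le>N. monom (coeff (c i) 0) i)"
      apply (rule sum.cong, simp) apply (subst cc) apply (simp add: monom_altdef) done
    finally have Pe: "P = (\<Sum>i\<le>N. monom (coeff (c i) 0) i)" .
    show ?thesis
    proof
      fix j
      have "coeff P j = coeff (c j) 0"
        using N(1) by (auto simp: Pe coeff_sum coeff_monom)
      then show "c j = [:coeff P j:]" using cc[of j] by simp
    qed
  qed
  show ?thesis unfolding qexp_def P_def[symmetric]
    by (rule the_equality[where P="?R"]) (use R U in auto)
qed



context
  fixes \<nu> :: "'k::field poly \<Rightarrow> 'g::linordered_ab_group_add extended"
  assumes val: "is_poly_valuation \<nu>"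
begin

lemma v_mult: "\<nu> (f*g) = \<nu> f + \<nu> g" using val by (simp add: is_poly_valuation_def)
lemma v_ultra: "min (\<nu> f) (\<nu> g) \<le> \<nu> (f+g)" using val by (simp add: is_poly_valuation_def)
lemma v_nminf: "\<nu> f \<noteq> Minf" using val by (simp add: is_poly_valuation_def)
lemma v_zero: "\<nu> 0 = Pinf" using val by (simp add: is_poly_valuation_def)
lemma v_one: "\<nu> 1 = Fin 0" using val by (simp add: is_poly_valuation_def)

lemma v_add_ge: "G \<le> \<nu> f \<Longrightarrow> G \<le> \<nu> g \<Longrightarrow> G \<le> \<nu> (f+g)"
  using v_ultra[of f g] by (metis min.bounded_iff order_trans)

lemma v_sum_ge: "finite A \<Longrightarrow> (\<And>x. x\<in>A \<Longrightarrow> G \<le> \<nu> (h x)) \<Longrightarrow> G \<le> \<nu> (sum h A)"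
  by (induction A rule: finite_induct) (auto simp: v_zero intro!: v_add_ge)

lemma v_fin_cases: "\<nu> f = Pinf \<or> (\<exists>r. \<nu> f = Fin r)"
  using v_nminf[of f] by (cases "\<nu> f") auto

lemma v_unit_fin:
  assumes "f * g = 1" shows "\<exists>r. \<nu> f = Fin r"
proof -
  have "\<nu> f + \<nu> g = Fin 0" using v_mult[of f g] assms v_one by simp
  then show ?thesis using v_fin_cases[of f] v_fin_cases[of g] by auto
qed

lemma v_const_fin: "c \<noteq> 0 \<Longrightarrow> \<exists>r. \<nu> [:c:] = Fin r"
  by (rule v_unit_fin[of _ "[:inverse c:]"]) (simp add: one_pCons)

lemma v_neg: "\<nu> (-f) = \<nu> f"
proof -
  obtain r where r: "\<nu> (-1) = Fin r" using v_unit_fin[of "-1" "-1"] by auto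
  have "\<nu> (-1) + \<nu> (-1) = Fin 0" using v_mult[of "-1" "-1"] v_one by simp
  then have "r = 0" using r
    by simp
  have e: "\<nu> (-1 * f) = \<nu> (-1) + \<nu> f" by (rule v_mult)
  show ?thesis using e r \<open>r = 0\<close> by (cases "\<nu> f") auto
qed

end


lemma pcompose_lin: "pcompose [:a,1:] [:b,1:] = [:a+b,(1::'k::field):]"
  by (simp add: pcompose_pCons)

lemma TT_trans:
  "TT Q' h = pcompose (TT Q h) [:sh Q' - sh Q, 1:]"
  unfolding TT_def by (simp add: pcompose_assoc[symmetric] pcompose_lin)

lemma range_fin: "finite (range (\<lambda>i. \<nu> ([:coeff (TT Q f) i:] * Q^i)))"
proof -
  let ?N = "degree (TT Q f)"
  have "range (\<lambda>i. \<nu> ([:coeff (TT Q f) i:] * Q^i)) \<subseteq> (\<lambda>i. \<nu> ([:coeff (TT Q f) i:] * Q^i)) ` {..Suc ?N}"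
  proof
    fix x assume "x \<in> range (\<lambda>i. \<nu> ([:coeff (TT Q f) i:] * Q^i))"
    then obtain i where i: "x = \<nu> ([:coeff (TT Q f) i:] * Q^i)" by auto
    show "x \<in> (\<lambda>i. \<nu> ([:coeff (TT Q f) i:] * Q^i)) ` {..Suc ?N}"
    proof (cases "i \<le> Suc ?N")
      case True then show ?thesis using i by auto
    next
      case False
      then have "x = \<nu> ([:coeff (TT Q f) (Suc ?N):] * Q^(Suc ?N))" using i by (simp add: coeff_eq_0)
      then show ?thesis by (auto intro!: image_eqI[where x="Suc ?N"])
    qed
  qed
  then show ?thesis by (rule finite_subset) simp
qed

context
  fixes \<nu> :: "'k::field poly \<Rightarrow> 'g::linordered_ab_group_add extended"
  assumes val: "is_poly_valuation \<nu>"
begin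

lemma v_delta:
  assumes "degree Q = 1" "lead_coeff Q = 1" "degree Q' = 1" "lead_coeff Q' = 1" "\<nu> Q < \<nu> Q'"
  shows "\<nu> [:sh Q' - sh Q:] = \<nu> Q"
proof -
  have Q: "Q = [:- sh Q, 1:]" using deg1_form[OF assms(1,2)] by (simp add: sh_def)
  have Q': "Q' = [:- sh Q', 1:]" using deg1_form[OF assms(3,4)] by (simp add: sh_def)
  have e1: "[:sh Q' - sh Q:] = Q + (- Q')" by (subst Q, subst Q') simp
  have e2: "Q = Q' + [:sh Q' - sh Q:]" by (subst Q, subst Q') simp
  have ge: "\<nu> Q \<le> \<nu> [:sh Q' - sh Q:]"
    using v_ultra[OF val, of Q "-Q'"] v_neg[OF val, of Q'] assms(5) e1 by (simp add: min_def split: if_splits)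
  show ?thesis
  proof (rule ccontr)
    assume "\<nu> [:sh Q' - sh Q:] \<noteq> \<nu> Q"
    then have "\<nu> Q < \<nu> [:sh Q' - sh Q:]" using ge by simp
    then have "\<nu> Q < min (\<nu> Q') (\<nu> [:sh Q' - sh Q:])" using assms(5) by simp
    also have "\<dots> \<le> \<nu> Q" using v_ultra[OF val, of Q' "[:sh Q' - sh Q:]"] e2 by simp
    finally show False by simp
  qed
qed

lemma W_shift:
  assumes vd: "\<nu> [:\<delta>:] = \<nu> Q"
  shows "\<forall>j. G \<le> \<nu> ([:coeff p j:] * Q^(j+k)) \<Longrightarrow> \<forall>j. G \<le> \<nu> ([:coeff (pcompose p [:\<delta>,1:]) j:] * Q^(j+k))"
proof (induction p arbitrary: k rule: pCons_induct)
  case 0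
  then show ?case by (simp add: v_zero[OF val])
next
  case (pCons c p)
  define P where "P = pcompose p [:\<delta>,1:]"
  have h0: "G \<le> \<nu> ([:c:] * Q^k)" using pCons.prems[rule_format, of 0] by simp
  have h1: "\<forall>j. G \<le> \<nu> ([:coeff p j:] * Q^(j+Suc k))"
  proof
    fix j show "G \<le> \<nu> ([:coeff p j:] * Q^(j+Suc k))"
      using pCons.prems[rule_format, of "Suc j"] by simp
  qed
  have IH: "\<forall>j. G \<le> \<nu> ([:coeff P j:] * Q^(j+Suc k))" using pCons.IH[OF h1] P_def by simp
  have comp: "pcompose (pCons c p) [:\<delta>,1:] = [:c:] + smult \<delta> P + pCons 0 P"
    by (simp add: pcompose_pCons P_def)
  show ?case
  proof
    fix j
    have cj: "coeff (pcompose (pCons c p) [:\<delta>,1:]) j =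
      (if j = 0 then c else 0) + \<delta> * coeff P j + (if j = 0 then 0 else coeff P (j - 1))"
      unfolding comp by (cases j) auto
    have t1: "G \<le> \<nu> ([:if j = 0 then c else 0:] * Q^(j+k))"
      using h0 by (auto simp: v_zero[OF val])
    have t2: "G \<le> \<nu> ([:\<delta> * coeff P j:] * Q^(j+k))"
    proof -
      have "[:\<delta> * coeff P j:] * Q^(j+k) = [:\<delta>:] * ([:coeff P j:] * Q^(j+k))"
      proof -
        have e: "[:\<delta> * coeff P j:] = [:\<delta>:] * [:coeff P j:]" by simp
        show ?thesis by (subst e) (rule mult.assoc)
      qed
      then have "\<nu> ([:\<delta> * coeff P j:] * Q^(j+k)) = \<nu> [:\<delta>:] + \<nu> ([:coeff P j:] * Q^(j+k))"
        by (simp only: v_mult[OF val, of "[:\<delta>:]" "[:coeff P j:] * Q^(j+k)", symmetric])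
      also have "\<dots> = \<nu> Q + \<nu> ([:coeff P j:] * Q^(j+k))" by (simp only: vd)
      also have "\<dots> = \<nu> (Q * ([:coeff P j:] * Q^(j+k)))" by (rule v_mult[OF val, symmetric])
      also have "Q * ([:coeff P j:] * Q^(j+k)) = [:coeff P j:] * Q^(j+Suc k)" by (simp add: algebra_simps)
      finally show ?thesis using IH[rule_format, of j] by (simp only:)
    qed
    have t3: "G \<le> \<nu> ([:if j = 0 then 0 else coeff P (j - 1):] * Q^(j+k))"
    proof (cases j)
      case 0 then show ?thesis by (simp add: v_zero[OF val])
    next
      case (Suc j') then show ?thesis using IH[rule_format, of j'] by simp
    qed
    have "[:coeff (pcompose (pCons c p) [:\<delta>,1:]) j:] * Q^(j+k) =
       [:if j = 0 then c else 0:] * Q^(j+k) + [:\<delta> * coeff P j:] * Q^(j+k) + [:if j = 0 then 0 else coeff P (j - 1):] * Q^(j+k)"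
      unfolding cj by (simp add: smult_add_left)
    then show "G \<le> \<nu> ([:coeff (pcompose (pCons c p) [:\<delta>,1:]) j:] * Q^(j+k))"
      using t1 t2 t3 by (simp add: v_add_ge[OF val])
  qed
qed

lemma pow_lt:
  assumes "\<nu> Q = Fin q" "\<nu> Q' = Fin q'" "q < q'"
  shows "\<exists>r r'. \<nu> (Q^i) = Fin r \<and> \<nu> (Q'^i) = Fin r' \<and> r \<le> r' \<and> (0 < i \<longrightarrow> r < r')"
proof (induction i)
  case 0 then show ?case by (simp add: v_one[OF val])
next
  case (Suc i)
  then obtain r r' where rr: "\<nu> (Q^i) = Fin r" "\<nu> (Q'^i) = Fin r'" "r \<le> r'" by auto
  have "\<nu> (Q^Suc i) = Fin (q + r)" "\<nu> (Q'^Suc i) = Fin (q' + r')"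
    using v_mult[OF val, of Q "Q^i"] v_mult[OF val, of Q' "Q'^i"] rr assms by auto
  moreover have "q + r < q' + r'" using assms(3) rr(3) by (simp add: add_less_le_mono)
  ultimately show ?case by auto
qed

lemma core:
  assumes Q: "degree Q = 1" "lead_coeff Q = 1" "\<nu> Q \<noteq> Pinf"
    and Q': "degree Q' = 1" "lead_coeff Q' = 1" "\<nu> Q' \<noteq> Pinf"
    and lt: "\<nu> Q < \<nu> Q'"
    and s1: "nuQ \<nu> Q h = \<nu> h" and s2: "nuQ \<nu> Q' h = \<nu> h"
  shows "\<nu> [:coeff (TT Q' h) 0:] = \<nu> h"
proof -
  define \<delta> where "\<delta> = sh Q' - sh Q"
  have n1: "nuQ \<nu> Q h = Min (range (\<lambda>i. \<nu> ([:coeff (TT Q h) i:] * Q^i)))"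
    unfolding nuQ_def qexp_eq[OF Q(1,2)] by simp
  have n2: "nuQ \<nu> Q' h = Min (range (\<lambda>i. \<nu> ([:coeff (TT Q' h) i:] * Q'^i)))"
    unfolding nuQ_def qexp_eq[OF Q'(1,2)] by simp
  have W0: "\<forall>j. \<nu> h \<le> \<nu> ([:coeff (TT Q h) j:] * Q^(j+0))"
  proof
    fix j
    have "Min (range (\<lambda>i. \<nu> ([:coeff (TT Q h) i:] * Q^i))) \<le> \<nu> ([:coeff (TT Q h) j:] * Q^j)"
      by (rule Min_le[OF range_fin]) (rule rangeI)
    then show "\<nu> h \<le> \<nu> ([:coeff (TT Q h) j:] * Q^(j+0))" using s1 n1 by simp
  qed
  have W1: "\<forall>j. \<nu> h \<le> \<nu> ([:coeff (TT Q' h) j:] * Q^j)"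
    using W_shift[OF v_delta[OF Q(1,2) Q'(1,2) lt], where G="\<nu> h" and k=0 and p="TT Q h"] W0 TT_trans[of Q' h Q] by simp
  obtain q q' where qq: "\<nu> Q = Fin q" "\<nu> Q' = Fin q'"
    using v_fin_cases[OF val, of Q] v_fin_cases[OF val, of Q'] Q(3) Q'(3) by auto
  have qlt: "q < q'" using lt qq by simp
  let ?S = "range (\<lambda>i. \<nu> ([:coeff (TT Q' h) i:] * Q'^i))"
  have fin: "finite ?S" by (rule range_fin)
  have t0: "\<nu> [:coeff (TT Q' h) 0:] = \<nu> ([:coeff (TT Q' h) 0:] * Q'^0)" by simp
  have "Min ?S \<le> \<nu> ([:coeff (TT Q' h) 0:] * Q'^0)" by (rule Min_le[OF fin]) (rule rangeI)
  then have ge: "\<nu> h \<le> \<nu> [:coeff (TT Q' h) 0:]" using s2 n2 by simp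
  have "Min ?S \<in> ?S" using fin by (intro Min_in) auto
  then obtain i where i: "\<nu> ([:coeff (TT Q' h) i:] * Q'^i) = \<nu> h" using s2 n2 by auto
  show ?thesis
  proof (cases "i = 0")
    case True then show ?thesis using i by simp
  next
    case False
    show ?thesis
    proof (cases "\<nu> h = Pinf")
      case True then show ?thesis using ge by simp
    next
      case hf: False
      have cne: "coeff (TT Q' h) i \<noteq> 0" using i hf by (auto simp: v_zero[OF val])
      obtain s where s: "\<nu> [:coeff (TT Q' h) i:] = Fin s" using v_const_fin[OF val cne] by auto
      obtain r r' where rr: "\<nu> (Q^i) = Fin r" "\<nu> (Q'^i) = Fin r'" "r < r'"
        using pow_lt[OF qq qlt, of i] False by auto
      have "\<nu> ([:coeff (TT Q' h) i:] * Q^i) < \<nu> ([:coeff (TT Q' h) i:] * Q'^i)"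
        unfolding v_mult[OF val, of "[:coeff (TT Q' h) i:]"] using s rr by simp
      then show ?thesis using W1[rule_format, of i] i by simp
    qed
  qed
qed

end


definition EE :: "'k::field poly \<Rightarrow> 'k poly poly" where
  "EE f = pcompose (map_poly (\<lambda>c. [:c:]) f) [:[:0,1:],1:]"

lemma hasse_EE: "hasse s f = coeff (EE f) s" unfolding hasse_def EE_def ..

lemma coeff_EE_pCons:
  "coeff (EE (pCons c f)) j = (if j=0 then [:c:] else 0) + [:0,1:] * coeff (EE f) j
     + (if j = 0 then 0 else coeff (EE f) (j-1))"
proof -
  have "EE (pCons c f) = [:[:c:]:] + smult [:0,1:] (EE f) + pCons 0 (EE f)"
    by (simp add: EE_def map_poly_pCons pcompose_pCons)
  then show ?thesis by (cases j) simp_all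
qed

lemma hasse_eval: "poly (coeff (EE f) j) a = coeff (pcompose f [:a,1:]) j"
proof (induction f arbitrary: j rule: pCons_induct)
  case 0 then show ?case by (simp add: EE_def)
next
  case (pCons c f)
  have "pcompose (pCons c f) [:a,1:] = [:c:] + smult a (pcompose f [:a,1:]) + pCons 0 (pcompose f [:a,1:])"
    by (simp add: pcompose_pCons)
  then show ?case using pCons.IH by (cases j) (simp_all add: coeff_EE_pCons)
qed

lemma hasse_deg: "coeff (EE f) j \<noteq> 0 \<Longrightarrow> degree (coeff (EE f) j) + j \<le> degree f"
proof (induction f arbitrary: j rule: pCons_induct)
  case 0 then show ?case by (simp add: EE_def)
next
  case (pCons c f)
  show ?case
  proof (cases "f = 0")
    case True
    then have "EE (pCons c f) = [:[:c:]:]" by (simp add: EE_def map_poly_pCons pcompose_pCons)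
    then show ?thesis using pCons.prems by (cases j) auto
  next
    case fnz: False
    have dF: "degree (pCons c f) = Suc (degree f)" using fnz by simp
    let ?X = "[:0,1::'a:]"
    have dX: "degree (?X * p) \<le> degree p + 1" for p
      using degree_mult_le[of ?X p] by simp
    show ?thesis
    proof (cases j)
      case 0
      let ?A = "coeff (EE f) 0"
      have c0: "coeff (EE (pCons c f)) j = [:c:] + ?X * ?A" using 0 by (simp add: coeff_EE_pCons)
      have "degree (?X * ?A) \<le> Suc (degree f)"
      proof (cases "?A = 0")
        case True then show ?thesis by simp
      next
        case False then show ?thesis using pCons.IH[of 0] dX[of ?A] by simp
      qed
      then have "degree ([:c:] + ?X * ?A) \<le> Suc (degree f)" by (intro degree_add_le) simp_all
      then show ?thesis using c0 0 dF by simp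
    next
      case (Suc j')
      let ?A = "coeff (EE f) j" let ?B = "coeff (EE f) j'"
      have cj: "coeff (EE (pCons c f)) j = ?X * ?A + ?B" using Suc by (simp add: coeff_EE_pCons)
      have ne: "?A \<noteq> 0 \<or> ?B \<noteq> 0" using pCons.prems cj by auto
      have jle: "j' \<le> degree f"
        using ne pCons.IH[of j] pCons.IH[of j'] Suc by auto
      have "degree (?X * ?A) \<le> degree f - j'"
      proof (cases "?A = 0")
        case True then show ?thesis by simp
      next
        case False then show ?thesis using pCons.IH[of j] dX[of ?A] Suc by simp
      qed
      moreover have "degree ?B \<le> degree f - j'"
      proof (cases "?B = 0")
        case True then show ?thesis by simp
      next
        case False then show ?thesis using pCons.IH[of j'] by simp
      qed
      ultimately have "degree (?X * ?A + ?B) \<le> degree f - j'" by (intro degree_add_le)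
      then show ?thesis using cj Suc dF jle by simp
    qed
  qed
qed



theorem mainTheorem17:
  fixes \<nu> :: "'k::field poly \<Rightarrow> 'g::linordered_ab_group_add extended"
    and m :: nat and \<Q> :: "'k poly set" and F :: "'k poly"
  assumes divisible: "divisible_group TYPE('g)"
    and val: "is_poly_valuation \<nu>"
    and ws: "well_specified \<nu>"
    and m_ge: "m \<ge> 1"
    and Psi_ne: "Psi \<nu> m \<noteq> {}"
    and Psi_nomax: "\<forall>Q\<in>Psi \<nu> m. \<exists>R\<in>Psi \<nu> m. \<nu> Q < \<nu> R"
    and Q_sub: "\<Q> \<subseteq> Psi \<nu> m"
    and Q_wo: "nu_well_ordered \<nu> \<Q>"
    and Q_cof: "\<forall>Q\<in>Psi \<nu> m. \<exists>R\<in>\<Q>. \<nu> Q \<le> \<nu> R"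
    and unstable_ex: "\<exists>f. \<not> Q_stable \<nu> \<Q> f"
    and F: "F \<in> KP_infty \<nu> \<Q>"
    and m1: "m = 1"
  shows "\<forall>l\<in>{1..degree F div m}. ultimately_constant \<nu> \<Q> (\<lambda>Q. \<nu> (qexp Q F l))"
proof
  fix l assume l: "l \<in> {1..degree F div m}"
  then have l1: "1 \<le> l" "l \<le> degree F" using m1 by auto
  have QP: "degree Q = 1 \<and> lead_coeff Q = 1 \<and> \<nu> Q \<noteq> Pinf" if "Q \<in> \<Q>" for Q
    using that Q_sub m1 by (auto simp: Psi_def key_poly_def)
  obtain Qa where Qa: "Qa \<in> \<Q>" using Psi_ne Q_cof by blast
  define g where "g = coeff (EE F) l"
  have beta: "\<nu> (qexp Q F l) = \<nu> [:coeff (TT Q g) 0:]" if "Q \<in> \<Q>" for Q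
  proof -
    have "qexp Q F l = [:coeff (TT Q F) l:]" using qexp_eq[of Q F] QP[OF that] by metis
    also have "coeff (TT Q F) l = coeff (TT Q g) 0"
      unfolding TT_def g_def by (simp add: hasse_eval)
    finally show ?thesis by simp
  qed
  show "ultimately_constant \<nu> \<Q> (\<lambda>Q. \<nu> (qexp Q F l))"
  proof (cases "g = 0")
    case True
    then show ?thesis unfolding ultimately_constant_def ult_holds_def
      using beta Qa by (intro exI[of _ "\<nu> 0"] bexI[of _ Qa]) (auto simp: TT_def)
  next
    case False
    define c where "c = lead_coeff g"
    have cnz: "c \<noteq> 0" using False c_def by simp
    define g1 where "g1 = smult (inverse c) g"
    have g1m: "lead_coeff g1 = 1" using cnz by (simp add: g1_def c_def)
    have dg: "degree g < degree F" using hasse_deg[of F l] False l1 by (simp add: g_def)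
    have dg1: "degree g1 < degree F" using dg cnz by (simp add: g1_def)
    have gg: "g = smult c g1" using cnz by (simp add: g1_def)
    have st: "Q_stable \<nu> \<Q> g1"
    proof (rule ccontr)
      assume "\<not> Q_stable \<nu> \<Q> g1"
      then have "degree F \<le> degree g1" using F g1m by (auto simp: KP_infty_def)
      then show False using dg1 by simp
    qed
    then obtain Q0 where Q0: "Q0 \<in> \<Q>" "\<forall>Q\<in>\<Q>. \<nu> Q0 \<le> \<nu> Q \<longrightarrow> nuQ \<nu> Q g1 = \<nu> g1"
      unfolding Q_stable_def ult_holds_def by blast
    obtain R where R: "R \<in> Psi \<nu> m" "\<nu> Q0 < \<nu> R" using Psi_nomax Q0(1) Q_sub by blast
    obtain Q1 where Q1: "Q1 \<in> \<Q>" "\<nu> R \<le> \<nu> Q1" using Q_cof R(1) by blast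
    have lt: "\<nu> Q0 < \<nu> Q1" using R Q1 by simp
    show ?thesis unfolding ultimately_constant_def ult_holds_def
    proof (intro exI[of _ "\<nu> [:c:] + \<nu> g1"] bexI[of _ Q1] ballI impI)
      fix Q assume Q: "Q \<in> \<Q>" "\<nu> Q1 \<le> \<nu> Q"
      have lt2: "\<nu> Q0 < \<nu> Q" using lt Q(2) by simp
      have s1: "nuQ \<nu> Q0 g1 = \<nu> g1" using Q0 by simp
      have s2: "nuQ \<nu> Q g1 = \<nu> g1" using Q0 Q lt2 by simp
      have co: "\<nu> [:coeff (TT Q g1) 0:] = \<nu> g1"
        using core[OF val, of Q0 Q g1] QP[OF Q0(1)] QP[OF Q(1)] lt2 s1 s2 by blast
      have "[:coeff (TT Q g) 0:] = [:c:] * [:coeff (TT Q g1) 0:]"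
        unfolding gg TT_def by (simp add: pcompose_smult)
      then have "\<nu> [:coeff (TT Q g) 0:] = \<nu> [:c:] + \<nu> g1"
        using v_mult[OF val, of "[:c:]" "[:coeff (TT Q g1) 0:]"] co by simp
      then show "\<nu> (qexp Q F l) = \<nu> [:c:] + \<nu> g1" using beta[OF Q(1)] by simp
    qed (rule Q1(1))
  qed
qed

end
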